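(* Let $v_1,\dots,v_m$ be distinct values, let $X_1,\dots,X_n$ be finite domain variables with domains $D(X_i)\subseteq\{v_1,\dots,v_m\}$, and let $B_{i,j}$ ($1\le i\le n$, $1\le j\le m$) be 0/1 variables. Consider the decomposition consisting of: the channelling constraints $X_i=v_j \leftrightarrow B_{i,j}=1$ for all $1\le i\le n$, $1\le j\le m$; the constraints $[B_{1,j},\dots,B_{n,j}]\ge_{\mathrm{lex}}[B_{1,j+1},\dots,B_{n,j+1}]$ for $1\le j<m$; and the constraints $\sum_{j=1}^m B_{i,j}=1$ for $1\le i\le n$. Then enforcing GAC on $\mathrm{Precedence}([v_1,\dots,v_m],[X_1,\dots,X_n])$ is strictly stronger than enforcing GAC on each constraint of this decomposition. That is: (i) if $\mathrm{Precedence}([v_1,\dots,v_m],[X_1,\dots,X_n])$ is GAC (with all $D(X_i)$ nonempty) and the domains of the $B_{i,j}$ are $D(B_{i,j})=\{1 \mid v_j\in D(X_i)\}\cup\{0\mid D(X_i)\neq\{v_j\}\}$, then every constraint of the decomposition is GAC; and (ii) there exist domains for the $X_i$ and $B_{i,j}$ such that every constraint of the decomposition is GAC but $\mathrm{Precedence}([v_1,\dots,v_m],[X_1,\dots,X_n])$ is not GAC.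
   Context: A support of a constraint is an assignment of a value from its domain to each of its variables that satisfies it; a constraint is GAC iff every value in every variable's domain belongs to some support. For distinct values $a,b$, $\mathrm{Precedence}([a,b],[X_1,\dots,X_n])$ holds iff $\min\{i \mid X_i=a \text{ or } i=n+1\} < \min\{i \mid X_i=b \text{ or } i=n+2\}$; $\mathrm{Precedence}([v_1,\dots,v_m],[X_1,\dots,X_n])$ holds iff $\mathrm{Precedence}([v_i,v_{i+1}],[X_1,\dots,X_n])$ holds for all $1\le i<m$. $\ge_{\mathrm{lex}}$ is the non-strict lexicographic order on 0/1 vectors. *)

theory Defs
  imports Main
begin

text \<open>A constraint is given by its scope S (a set of variables) and a relation C on
assignments (C only inspects the variables of S). D gives the domains.\<close>

definition is_support :: "'v set \<Rightarrow> ('v \<Rightarrow> 'd set) \<Rightarrow> (('v \<Rightarrow> 'd) \<Rightarrow> bool) \<Rightarrow> ('v \<Rightarrow> 'd) \<Rightarrow> bool" where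
  "is_support S D C \<sigma> \<longleftrightarrow> (\<forall>x\<in>S. \<sigma> x \<in> D x) \<and> C \<sigma>"

definition GAC :: "'v set \<Rightarrow> ('v \<Rightarrow> 'd set) \<Rightarrow> (('v \<Rightarrow> 'd) \<Rightarrow> bool) \<Rightarrow> bool" where
  "GAC S D C \<longleftrightarrow> (\<forall>x\<in>S. \<forall>d\<in>D x. \<exists>\<sigma>. is_support S D C \<sigma> \<and> \<sigma> x = d)"

section \<open>Precedence (variables and values indexed from 1)\<close>

definition prec_pair :: "'a \<Rightarrow> 'a \<Rightarrow> nat \<Rightarrow> (nat \<Rightarrow> 'a) \<Rightarrow> bool" where
  "prec_pair a b n X \<longleftrightarrow>
     (LEAST i. (i \<in> {1..n} \<and> X i = a) \<or> i = n + 1) < (LEAST i. (i \<in> {1..n} \<and> X i = b) \<or> i = n + 2)"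

definition Precedence :: "(nat \<Rightarrow> 'a) \<Rightarrow> nat \<Rightarrow> nat \<Rightarrow> (nat \<Rightarrow> 'a) \<Rightarrow> bool" where
  "Precedence v m n X \<longleftrightarrow> (\<forall>i. 1 \<le> i \<and> i < m \<longrightarrow> prec_pair (v i) (v (i + 1)) n X)"

definition lex_ge :: "nat \<Rightarrow> (nat \<Rightarrow> nat) \<Rightarrow> (nat \<Rightarrow> nat) \<Rightarrow> bool" where
  "lex_ge n b c \<longleftrightarrow> (\<forall>i\<in>{1..n}. b i = c i) \<or>
     (\<exists>k\<in>{1..n}. (\<forall>i\<in>{1..<k}. b i = c i) \<and> b k > c k)"

datatype var = XV nat | BV nat nat

fun dom_of :: "(nat \<Rightarrow> 'a set) \<Rightarrow> (nat \<Rightarrow> nat \<Rightarrow> nat set) \<Rightarrow> var \<Rightarrow> ('a + nat) set" where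
  "dom_of DX DB (XV i) = Inl ` DX i"
| "dom_of DX DB (BV i j) = Inr ` DB i j"

definition xval :: "(var \<Rightarrow> 'a + nat) \<Rightarrow> nat \<Rightarrow> 'a" where
  "xval \<sigma> i = (case \<sigma> (XV i) of Inl a \<Rightarrow> a | Inr _ \<Rightarrow> undefined)"

definition bval :: "(var \<Rightarrow> 'a + nat) \<Rightarrow> nat \<Rightarrow> nat \<Rightarrow> nat" where
  "bval \<sigma> i j = (case \<sigma> (BV i j) of Inr b \<Rightarrow> b | Inl _ \<Rightarrow> undefined)"

definition GAC_prec :: "(nat \<Rightarrow> 'a) \<Rightarrow> nat \<Rightarrow> nat \<Rightarrow> (nat \<Rightarrow> 'a set) \<Rightarrow> (nat \<Rightarrow> nat \<Rightarrow> nat set) \<Rightarrow> bool" where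
  "GAC_prec v m n DX DB \<longleftrightarrow>
     GAC {XV i | i. i \<in> {1..n}} (dom_of DX DB) (\<lambda>\<sigma>. Precedence v m n (xval \<sigma>))"

definition GAC_decomp :: "(nat \<Rightarrow> 'a) \<Rightarrow> nat \<Rightarrow> nat \<Rightarrow> (nat \<Rightarrow> 'a set) \<Rightarrow> (nat \<Rightarrow> nat \<Rightarrow> nat set) \<Rightarrow> bool" where
  "GAC_decomp v m n DX DB \<longleftrightarrow>
     (\<forall>i\<in>{1..n}. \<forall>j\<in>{1..m}.
        GAC {XV i, BV i j} (dom_of DX DB) (\<lambda>\<sigma>. xval \<sigma> i = v j \<longleftrightarrow> bval \<sigma> i j = 1))
   \<and> (\<forall>j. 1 \<le> j \<and> j < m \<longrightarrow>
        GAC ({BV i j | i. i \<in> {1..n}} \<union> {BV i (j + 1) | i. i \<in> {1..n}}) (dom_of DX DB)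
            (\<lambda>\<sigma>. lex_ge n (\<lambda>i. bval \<sigma> i j) (\<lambda>i. bval \<sigma> i (j + 1))))
   \<and> (\<forall>i\<in>{1..n}.
        GAC {BV i j | j. j \<in> {1..m}} (dom_of DX DB) (\<lambda>\<sigma>. (\<Sum>j=1..m. bval \<sigma> i j) = 1))"

end

theory Submission
  imports Defs
begin

definition chs :: "(nat \<Rightarrow> 'a) \<Rightarrow> (nat \<Rightarrow> 'a) \<Rightarrow> var \<Rightarrow> 'a + nat" where
  "chs f v y = (case y of XV i \<Rightarrow> Inl (f i) | BV i j \<Rightarrow> Inr (if f i = v j then 1 else 0))"

lemma chs_x[simp]: "xval (chs f v) i = f i" by (simp add: xval_def chs_def)
lemma chs_b[simp]: "bval (chs f v) i j = (if f i = v j then 1 else 0)" by (simp add: bval_def chs_def)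
lemma chs_XV[simp]: "chs f v (XV i) = Inl (f i)" by (simp add: chs_def)
lemma chs_BV[simp]: "chs f v (BV i j) = Inr (if f i = v j then 1 else 0)" by (simp add: chs_def)

lemma prec_lex:
  assumes "prec_pair a b n X" "a \<noteq> b"
  shows "lex_ge n (\<lambda>i. if X i = a then 1 else 0) (\<lambda>i. if X i = b then 1 else 0)"
proof -
  define p where "p = (LEAST i. (i \<in> {1..n} \<and> X i = a) \<or> i = n + 1)"
  define q where "q = (LEAST i. (i \<in> {1..n} \<and> X i = b) \<or> i = n + 2)"
  have pq: "p < q" using assms(1) unfolding prec_pair_def p_def q_def .
  have pP: "(p \<in> {1..n} \<and> X p = a) \<or> p = n + 1"
    unfolding p_def by (rule LeastI[of _ "n+1"]) simp
  have pl: "\<And>i. i < p \<Longrightarrow> \<not> ((i \<in> {1..n} \<and> X i = a) \<or> i = n + 1)"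
    unfolding p_def by (rule not_less_Least)
  have qle: "\<And>i. i \<in> {1..n} \<Longrightarrow> X i = b \<Longrightarrow> q \<le> i"
    unfolding q_def by (rule Least_le) simp
  show ?thesis
  proof (cases "p = n + 1")
    case True
    have "\<forall>i\<in>{1..n}. X i \<noteq> a \<and> X i \<noteq> b"
    proof
      fix i assume i: "i \<in> {1..n}"
      then have "i < p" using True by auto
      then show "X i \<noteq> a \<and> X i \<noteq> b" using pl[of i] qle[of i] i pq by auto
    qed
    then show ?thesis unfolding lex_ge_def by auto
  next
    case False
    then have p1: "p \<in> {1..n}" "X p = a" using pP by auto
    have "\<forall>i\<in>{1..<p}. (if X i = a then 1 else 0) = (if X i = b then (1::nat) else 0)"
    proof
      fix i assume i: "i \<in> {1..<p}"
      then have "i \<in> {1..n}" using p1 by auto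
      then show "(if X i = a then 1 else 0) = (if X i = b then (1::nat) else 0)"
        using pl[of i] qle[of i] i pq by auto
    qed
    moreover have "X p \<noteq> b" using qle[of p] p1 pq by auto
    ultimately show ?thesis unfolding lex_ge_def using p1 assms(2)
      by (intro disjI2 bexI[of _ p]) auto
  qed
qed

lemma part1:
  fixes v :: "nat \<Rightarrow> 'a"
  assumes inj: "inj_on v {1..m}"
  and dx: "\<forall>i\<in>{1..n}. DX i \<subseteq> v ` {1..m} \<and> DX i \<noteq> {}"
  and gp: "GAC_prec v m n DX DB"
  and db: "\<forall>i\<in>{1..n}. \<forall>j\<in>{1..m}. DB i j = (if v j \<in> DX i then {1} else {}) \<union> (if DX i \<noteq> {v j} then {0} else {})"
  shows "GAC_decomp v m n DX DB"
proof -
  have dom: "chs f v (BV i j) \<in> dom_of DX DB (BV i j)"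
    if "i \<in> {1..n}" "j \<in> {1..m}" "f i \<in> DX i" for f i j
    using that db by auto
  have pick: "\<exists>a\<in>DX i. (if a = v j then 1 else 0) = b"
    if "i \<in> {1..n}" "j \<in> {1..m}" "b \<in> DB i j" for i j b
  proof -
    have D: "DB i j = (if v j \<in> DX i then {1} else {}) \<union> (if DX i \<noteq> {v j} then {0} else {})"
      using db that by auto
    show ?thesis
    proof (cases "b = 1")
      case True
      then have "v j \<in> DX i" using D that(3) by (auto split: if_splits)
      then show ?thesis using True by auto
    next
      case False
      then have b0: "b = 0" "DX i \<noteq> {v j}" using D that(3) by (auto split: if_splits)
      have ne: "DX i \<noteq> {}" using dx that(1) by simp
      have "\<exists>a\<in>DX i. a \<noteq> v j"
      proof (rule ccontr)
        assume "\<not> (\<exists>a\<in>DX i. a \<noteq> v j)"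
        then have "DX i \<subseteq> {v j}" by auto
        then show False using ne b0(2) by (simp add: subset_singleton_iff)
      qed
      then obtain a where "a \<in> DX i" "a \<noteq> v j" by blast
      then show ?thesis using b0 by auto
    qed
  qed
  have sum1: "(\<Sum>j=1..m. bval (chs (\<lambda>_. a) v) i j) = 1" if av: "a \<in> v ` {1..m}" for a i
  proof -
    obtain j0 where j0: "j0 \<in> {1..m}" "a = v j0" using av by blast
    have "(\<Sum>j=1..m. bval (chs (\<lambda>_. a) v) i j) = (\<Sum>j\<in>{1..m}. if j = j0 then 1 else 0)"
    proof (rule sum.cong)
      fix j assume "j \<in> {1..m}"
      then have "(v j0 = v j) = (j = j0)" using j0(1) inj by (metis inj_on_eq_iff)
      then show "bval (chs (\<lambda>_. a) v) i j = (if j = j0 then 1 else 0)" using j0(2) by simp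
    qed simp
    also have "\<dots> = 1" using j0 by simp
    finally show ?thesis .
  qed
  have A: "\<forall>i\<in>{1..n}. \<forall>j\<in>{1..m}.
        GAC {XV i, BV i j} (dom_of DX DB) (\<lambda>\<sigma>. xval \<sigma> i = v j \<longleftrightarrow> bval \<sigma> i j = 1)"
  proof (intro ballI)
    fix i j assume i: "i \<in> {1..n}" and j: "j \<in> {1..m}"
    have sup: "is_support {XV i, BV i j} (dom_of DX DB) (\<lambda>\<sigma>. xval \<sigma> i = v j \<longleftrightarrow> bval \<sigma> i j = 1) (chs (\<lambda>_. a) v)"
      if "a \<in> DX i" for a
      using dom[of i j "\<lambda>_. a"] i j that by (auto simp: is_support_def)
    show "GAC {XV i, BV i j} (dom_of DX DB) (\<lambda>\<sigma>. xval \<sigma> i = v j \<longleftrightarrow> bval \<sigma> i j = 1)"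
      unfolding GAC_def
    proof (intro ballI)
      fix x d assume x: "x \<in> {XV i, BV i j}" and d: "d \<in> dom_of DX DB x"
      show "\<exists>\<sigma>. is_support {XV i, BV i j} (dom_of DX DB) (\<lambda>\<sigma>. xval \<sigma> i = v j \<longleftrightarrow> bval \<sigma> i j = 1) \<sigma> \<and> \<sigma> x = d"
      proof (cases "x = XV i")
        case True
        then obtain a where "a \<in> DX i" "d = Inl a" using d by auto
        then show ?thesis using sup True by (intro exI[of _ "chs (\<lambda>_. a) v"]) auto
      next
        case False
        then have xb: "x = BV i j" using x by auto
        then obtain b where b: "b \<in> DB i j" "d = Inr b" using d by auto
        obtain a where "a \<in> DX i" "(if a = v j then 1 else 0) = b" using pick[OF i j b(1)] by blast
        then show ?thesis using sup xb b by (intro exI[of _ "chs (\<lambda>_. a) v"]) auto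
      qed
    qed
  qed
  have C: "\<forall>i\<in>{1..n}.
        GAC {BV i j | j. j \<in> {1..m}} (dom_of DX DB) (\<lambda>\<sigma>. (\<Sum>j=1..m. bval \<sigma> i j) = 1)"
  proof (intro ballI)
    fix i assume i: "i \<in> {1..n}"
    have sup: "is_support {BV i j | j. j \<in> {1..m}} (dom_of DX DB) (\<lambda>\<sigma>. (\<Sum>j=1..m. bval \<sigma> i j) = 1) (chs (\<lambda>_. a) v)"
      if "a \<in> DX i" for a
    proof -
      have "a \<in> v ` {1..m}" using dx i that by blast
      then have "(\<Sum>j=1..m. bval (chs (\<lambda>_. a) v) i j) = 1" by (rule sum1)
      then show ?thesis using dom[of i _ "\<lambda>_. a"] i that by (auto simp: is_support_def)
    qed
    show "GAC {BV i j | j. j \<in> {1..m}} (dom_of DX DB) (\<lambda>\<sigma>. (\<Sum>j=1..m. bval \<sigma> i j) = 1)"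
      unfolding GAC_def
    proof (intro ballI)
      fix x d assume x: "x \<in> {BV i j | j. j \<in> {1..m}}" and d: "d \<in> dom_of DX DB x"
      then obtain j where j: "j \<in> {1..m}" "x = BV i j" by auto
      then obtain b where b: "b \<in> DB i j" "d = Inr b" using d by auto
      obtain a where "a \<in> DX i" "(if a = v j then 1 else 0) = b" using pick[OF i j(1) b(1)] by blast
      then show "\<exists>\<sigma>. is_support {BV i j | j. j \<in> {1..m}} (dom_of DX DB) (\<lambda>\<sigma>. (\<Sum>j=1..m. bval \<sigma> i j) = 1) \<sigma> \<and> \<sigma> x = d"
        using sup j b by (intro exI[of _ "chs (\<lambda>_. a) v"]) auto
    qed
  qed
  have B: "\<forall>j. 1 \<le> j \<and> j < m \<longrightarrow>
        GAC ({BV i j | i. i \<in> {1..n}} \<union> {BV i (j + 1) | i. i \<in> {1..n}}) (dom_of DX DB)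
            (\<lambda>\<sigma>. lex_ge n (\<lambda>i. bval \<sigma> i j) (\<lambda>i. bval \<sigma> i (j + 1)))"
  proof (intro allI impI)
    fix j assume j: "1 \<le> j \<and> j < m"
    let ?S = "{BV i j | i. i \<in> {1..n}} \<union> {BV i (j + 1) | i. i \<in> {1..n}}"
    let ?C = "\<lambda>\<sigma>. lex_ge n (\<lambda>i. bval \<sigma> i j) (\<lambda>i. bval \<sigma> i (j + 1))"
    have neq: "v j \<noteq> v (j+1)"
    proof
      assume "v j = v (j+1)"
      then have "j = j + 1" using inj j by (intro inj_onD[OF inj]) auto
      then show False by simp
    qed
    show "GAC ?S (dom_of DX DB) ?C"
      unfolding GAC_def
    proof (intro ballI)
      fix x d assume x: "x \<in> ?S" and d: "d \<in> dom_of DX DB x"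
      then obtain k c where kc: "k \<in> {1..n}" "c \<in> {1..m}" "x = BV k c" "c = j \<or> c = j + 1"
        using j by auto
      then obtain b where b: "b \<in> DB k c" "d = Inr b" using d by auto
      obtain a where a: "a \<in> DX k" "(if a = v c then 1 else 0) = b" using pick[OF kc(1,2) b(1)] by blast
      have "XV k \<in> {XV i | i. i \<in> {1..n}}" "Inl a \<in> dom_of DX DB (XV k)" using kc a by auto
      then obtain \<tau> where \<tau>: "is_support {XV i | i. i \<in> {1..n}} (dom_of DX DB) (\<lambda>\<sigma>. Precedence v m n (xval \<sigma>)) \<tau>"
        "\<tau> (XV k) = Inl a"
        using gp unfolding GAC_prec_def GAC_def by blast
      define f where "f = xval \<tau>"
      have fD: "f i \<in> DX i" if "i \<in> {1..n}" for i
      proof -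
        have "\<tau> (XV i) \<in> Inl ` DX i" using \<tau>(1) that unfolding is_support_def by fastforce
        then show ?thesis unfolding f_def xval_def by auto
      qed
      have fk: "f k = a" using \<tau>(2) unfolding f_def xval_def by simp
      have pr: "Precedence v m n f" using \<tau>(1) unfolding is_support_def f_def by simp
      then have "prec_pair (v j) (v (j+1)) n f" using j unfolding Precedence_def by auto
      then have lx: "?C (chs f v)" using prec_lex[OF _ neq] by simp
      have "\<forall>y\<in>?S. chs f v y \<in> dom_of DX DB y"
      proof
        fix y assume "y \<in> ?S"
        then obtain i c' where "i \<in> {1..n}" "c' \<in> {1..m}" "y = BV i c'" using j by auto
        then show "chs f v y \<in> dom_of DX DB y" using dom fD by auto
      qed
      then show "\<exists>\<sigma>. is_support ?S (dom_of DX DB) ?C \<sigma> \<and> \<sigma> x = d"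
        using lx kc b a fk by (intro exI[of _ "chs f v"]) (auto simp: is_support_def)
    qed
  qed
  show ?thesis unfolding GAC_decomp_def by (rule conjI[OF A conjI[OF B C]])
qed


definition pt :: "nat \<Rightarrow> nat \<Rightarrow> nat \<Rightarrow> var \<Rightarrow> nat + nat" where
  "pt x a b y = (case y of XV _ \<Rightarrow> Inl x | BV _ j \<Rightarrow> Inr (if j = 1 then a else b))"

lemma pt_simps[simp]: "pt x a b (XV i) = Inl x" "pt x a b (BV i j) = Inr (if j = 1 then a else b)"
  "xval (pt x a b) i = x" "bval (pt x a b) i j = (if j = 1 then a else b)"
  by (simp_all add: pt_def xval_def bval_def)

lemma part2:
  "\<exists>(v :: nat \<Rightarrow> nat) m n DX DB.
            inj_on v {1..m}
          \<and> (\<forall>i\<in>{1..n}. DX i \<subseteq> v ` {1..m} \<and> DX i \<noteq> {})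
          \<and> (\<forall>i\<in>{1..n}. \<forall>j\<in>{1..m}. DB i j \<subseteq> {0, 1})
          \<and> GAC_decomp v m n DX DB
          \<and> \<not> GAC_prec v m n DX DB"
proof (intro exI conjI)
  let ?DX = "\<lambda>_::nat. {1::nat,2}"
  let ?DB = "\<lambda>(_::nat) (_::nat). {0::nat,1}"
  show "inj_on (\<lambda>x::nat. x) {1..2}" by simp
  show "\<forall>i\<in>{1..1::nat}. ?DX i \<subseteq> (\<lambda>x. x) ` {1..2} \<and> ?DX i \<noteq> {}" by auto
  show "\<forall>i\<in>{1..1::nat}. \<forall>j\<in>{1..2::nat}. ?DB i j \<subseteq> {0, 1}" by auto
  have j2: "{1..2::nat} = {1,2}" by auto
  have sum2: "(\<Sum>j=1..2. f j) = f 1 + f (2::nat)" for f :: "nat \<Rightarrow> nat" unfolding j2 by simp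
  show "GAC_decomp (\<lambda>x. x) 2 1 ?DX ?DB"
    unfolding GAC_decomp_def GAC_def is_support_def
  proof (intro conjI ballI allI impI)
    fix i j x d
    assume i: "i \<in> {1..1::nat}" and j: "j \<in> {1..2::nat}" and x: "x \<in> {XV i, BV i j}"
      and d: "d \<in> dom_of ?DX ?DB x"
    have jj: "j = 1 \<or> j = 2" using j by auto
    show "\<exists>\<sigma>. ((\<forall>x\<in>{XV i, BV i j}. \<sigma> x \<in> dom_of ?DX ?DB x) \<and> (xval \<sigma> i = j) = (bval \<sigma> i j = 1)) \<and> \<sigma> x = d"
      using x d jj
      apply (elim insertE disjE; simp)
      by (auto intro: exI[of _ "pt 1 1 0"] exI[of _ "pt 2 0 1"])
  next
    fix j x d
    assume j: "1 \<le> j \<and> j < (2::nat)"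
      and x: "x \<in> {BV i j |i. i \<in> {1..1::nat}} \<union> {BV i (j + 1) |i. i \<in> {1..1}}"
      and d: "d \<in> dom_of ?DX ?DB x"
    have j1: "j = 1" using j by auto
    have xx: "x = BV 1 1 \<or> x = BV 1 2" using x j1 by auto
    show "\<exists>\<sigma>. ((\<forall>x\<in>{BV i j |i. i \<in> {1..1::nat}} \<union> {BV i (j + 1) |i. i \<in> {1..1}}. \<sigma> x \<in> dom_of ?DX ?DB x) \<and>
          lex_ge 1 (\<lambda>i. bval \<sigma> i j) (\<lambda>i. bval \<sigma> i (j + 1))) \<and> \<sigma> x = d"
    proof -
      have "(x = BV 1 1 \<and> d = Inr 0) \<or> (x = BV 1 1 \<and> d = Inr 1) \<or> (x = BV 1 2 \<and> d = Inr 0) \<or> (x = BV 1 2 \<and> d = Inr 1)"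
        using xx d by auto
      then show ?thesis unfolding j1 lex_ge_def
        apply (elim disjE conjE)
        subgoal by (rule exI[of _ "pt 1 0 0"]) auto
        subgoal by (rule exI[of _ "pt 1 1 0"]) auto
        subgoal by (rule exI[of _ "pt 1 1 0"]) auto
        subgoal by (rule exI[of _ "pt 1 1 1"]) auto
        done
    qed
  next
    fix i x d
    assume i: "i \<in> {1..1::nat}" and x: "x \<in> {BV i j |j. j \<in> {1..2::nat}}"
      and d: "d \<in> dom_of ?DX ?DB x"
    have xx: "x = BV i 1 \<or> x = BV i 2" using x by auto
    show "\<exists>\<sigma>. ((\<forall>x\<in>{BV i j |j. j \<in> {1..2::nat}}. \<sigma> x \<in> dom_of ?DX ?DB x) \<and> (\<Sum>j = 1..2. bval \<sigma> i j) = 1) \<and> \<sigma> x = d"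
    proof -
      have "(x = BV i 1 \<and> d = Inr 0) \<or> (x = BV i 1 \<and> d = Inr 1) \<or> (x = BV i 2 \<and> d = Inr 0) \<or> (x = BV i 2 \<and> d = Inr 1)"
        using xx d by auto
      then show ?thesis unfolding sum2
        apply (elim disjE conjE)
        subgoal by (rule exI[of _ "pt 1 0 1"]) auto
        subgoal by (rule exI[of _ "pt 1 1 0"]) auto
        subgoal by (rule exI[of _ "pt 1 1 0"]) auto
        subgoal by (rule exI[of _ "pt 1 0 1"]) auto
        done
    qed
  qed
  show "\<not> GAC_prec (\<lambda>x. x) 2 1 ?DX ?DB"
  proof
    assume "GAC_prec (\<lambda>x. x) 2 1 ?DX ?DB"
    then obtain \<sigma> where s: "is_support {XV i |i. i \<in> {1..1::nat}} (dom_of ?DX ?DB) (\<lambda>\<sigma>. Precedence (\<lambda>x. x) 2 1 (xval \<sigma>)) \<sigma>"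
      "\<sigma> (XV 1) = Inl 2"
    proof -
      have h1: "XV 1 \<in> {XV i |i. i \<in> {1..1::nat}}" by auto
      have h2: "Inl 2 \<in> dom_of ?DX ?DB (XV 1)" by simp
      have "\<forall>x\<in>{XV i |i. i \<in> {1..1::nat}}. \<forall>d\<in>dom_of ?DX ?DB x. \<exists>\<sigma>. is_support {XV i |i. i \<in> {1..1::nat}} (dom_of ?DX ?DB) (\<lambda>\<sigma>. Precedence (\<lambda>x. x) 2 1 (xval \<sigma>)) \<sigma> \<and> \<sigma> x = d"
        using \<open>GAC_prec (\<lambda>x. x) 2 1 ?DX ?DB\<close> unfolding GAC_prec_def GAC_def .
      from this[rule_format, OF h1 h2] show ?thesis using that by blast
    qed
    then have X1: "xval \<sigma> 1 = 2" by (simp add: xval_def)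
    have "Precedence (\<lambda>x. x) 2 1 (xval \<sigma>)" using s(1) unfolding is_support_def by blast
    then have "prec_pair (1::nat) 2 1 (xval \<sigma>)" unfolding Precedence_def
      by (drule_tac x=1 in spec) (simp add: numeral_2_eq_2)
    moreover have L1: "(LEAST i. (i \<in> {1..1} \<and> xval \<sigma> i = (1::nat)) \<or> i = 1 + 1) = 2"
      using X1 by (intro Least_equality) auto
    moreover have L2: "(LEAST i. (i \<in> {1..1} \<and> xval \<sigma> i = (2::nat)) \<or> i = 1 + 2) = 1"
      using X1 by (intro Least_equality) auto
    ultimately show False unfolding prec_pair_def by simp
  qed
qed

theorem theorem5:
  shows "(\<forall>(v :: nat \<Rightarrow> 'a) m n DX DB.
            inj_on v {1..m}
          \<and> (\<forall>i\<in>{1..n}. DX i \<subseteq> v ` {1..m} \<and> DX i \<noteq> {})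
          \<and> GAC_prec v m n DX DB
          \<and> (\<forall>i\<in>{1..n}. \<forall>j\<in>{1..m}.
               DB i j = (if v j \<in> DX i then {1} else {}) \<union> (if DX i \<noteq> {v j} then {0} else {}))
          \<longrightarrow> GAC_decomp v m n DX DB)
       \<and> (\<exists>(v :: nat \<Rightarrow> nat) m n DX DB.
            inj_on v {1..m}
          \<and> (\<forall>i\<in>{1..n}. DX i \<subseteq> v ` {1..m} \<and> DX i \<noteq> {})
          \<and> (\<forall>i\<in>{1..n}. \<forall>j\<in>{1..m}. DB i j \<subseteq> {0, 1})
          \<and> GAC_decomp v m n DX DB
          \<and> \<not> GAC_prec v m n DX DB)"
  apply (rule conjI)
   apply (intro allI impI)
   apply (elim conjE)
   apply (rule part1; assumption)
  apply (rule part2)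
  done

end
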